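(* Let $p>0$, $M$ a positive integer and $Y\in\Upsilon^m_p\cap(\mathbb{C}^{M\times M})^m$. Then: (i) The map $X\mapsto K_p(X,Y)$, defined on $\Upsilon^m_p$ with values in $\coprod_N\mathbb{C}^{N\times N}\otimes\mathbb{C}^{M\times M}$, is a noncommutative function that belongs to $\overline{H^2_{m,p}}\otimes\mathbb{C}^{M\times M}$; that is, for all $e_1,e_2\in\mathbb{C}^M$ the function $e_1^\ast K_p(\cdot,Y)e_2: X\mapsto\sum_{w\in\mathcal{F}_m}p^{|w|}\,(e_1^\ast(Y^w)^\ast e_2)\,X^w$ belongs to $\overline{H^2_{m,p}}$. (ii) For all $e_1,e_2\in\mathbb{C}^M$ and all $f\in\overline{H^2_{m,p}}$, \[ \langle f,\,e_1^\ast K_p(\cdot,Y)e_2\rangle_{\ell^2_p(\mathcal{F}_m)}=e_2^\ast f(Y)e_1. \]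
   Context: $\mathcal{F}_m$ is the free monoid on $\{1,\dots,m\}$, $\mathcal{F}_m^{[l]}$ the words of length $l$; for $X\in(\mathbb{C}^{N\times N})^m$, $X^w=X_{w_1}\cdots X_{w_t}$, $X^\emptyset=I_N$. For $p>0$, $\ell^2_p(\mathcal{F}_m)$ is the Hilbert space of complex sequences $\{f_w\}$ with $\sum_wp^{-|w|}|f_w|^2<\infty$, with inner product $\langle\{f_w\},\{g_w\}\rangle=\sum_wp^{-|w|}f_w\overline{g_w}$. $\Upsilon^m_p$ is the set of $X\in\coprod_N(\mathbb{C}^{N\times N})^m$ such that $\sum_{w\in\mathcal{F}_m}p^{|w|}(X^w)^\ast X^w$ converges. For $X,Y\in\Upsilon^m_p$ (with $X$ of size $N$, $Y$ of size $M$), $K_p(X,Y)=\sum_{l=0}^\infty\sum_{w\in\mathcal{F}_m^{[l]}}p^l\,X^w\otimes(Y^w)^\ast\in\mathbb{C}^{N\times N}\otimes\mathbb{C}^{M\times M}$ (the series converges). $\overline{H^2_{m,p}}$ is the space of noncommutative functions $f:\Upsilon^m_p\to\coprod_N\mathbb{C}^{N\times N}$ (mapping level $N$ to $\mathbb{C}^{N\times N}$, respecting direct sums and similarities) for which there is $\{f_w\}\in\ell^2_p(\mathcal{F}_m)$ with $f(X)=\sum_{l=0}^\infty\sum_{w\in\mathcal{F}_m^{[l]}}f_wX^w$ for all $X\in\Upsilon^m_p$; it is a Hilbert space with the inner product of $\ell^2_p(\mathcal{F}_m)$ applied to the coefficient sequences. For $e_1,e_2\in\mathbb{C}^M$ and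 a function $F$ with values in $\mathbb{C}^{N\times N}\otimes\mathbb{C}^{M\times M}$, $e_1^\ast Fe_2$ denotes $(I_N\otimes e_1^\ast)F(I_N\otimes e_2)$. *)

theory Defs
  imports "Jordan_Normal_Form.Schur_Decomposition" "HOL-Analysis.Infinite_Sum"
begin

text \<open>Words over the alphabet {0,...,m-1} (0-based encoding of {1,...,m}).\<close>
definition allwords :: "nat \<Rightarrow> nat list set" where
  "allwords m = {w. set w \<subseteq> {..<m}}"

definition words :: "nat \<Rightarrow> nat \<Rightarrow> nat list set" where
  "words m l = {w. length w = l \<and> set w \<subseteq> {..<m}}"

text \<open>A point of the disjoint union over N of m-tuples of N x N matrices is a pair (N, X).\<close>
definition ncpt :: "nat \<Rightarrow> nat \<Rightarrow> complex mat list \<Rightarrow> bool" where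
  "ncpt m N X \<longleftrightarrow> 0 < N \<and> length X = m \<and> (\<forall>A\<in>set X. A \<in> carrier_mat N N)"

definition mpow :: "nat \<Rightarrow> complex mat list \<Rightarrow> nat list \<Rightarrow> complex mat" where
  "mpow N X w = foldr (\<lambda>i A. X ! i * A) w (1\<^sub>m N)"

definition upsilon :: "nat \<Rightarrow> real \<Rightarrow> (nat \<times> complex mat list) set" where
  "upsilon m p = {(N, X). ncpt m N X \<and>
     (\<forall>i<N. \<forall>j<N. summable (\<lambda>l. \<Sum>w\<in>words m l.
        complex_of_real (p ^ l) * (mat_adjoint (mpow N X w) * mpow N X w) $$ (i, j)))}"

definition kron :: "complex mat \<Rightarrow> complex mat \<Rightarrow> complex mat" where
  "kron A B = mat (dim_row A * dim_row B) (dim_col A * dim_col B)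
     (\<lambda>(i, j). A $$ (i div dim_row B, j div dim_col B) * B $$ (i mod dim_row B, j mod dim_col B))"

definition Kp :: "nat \<Rightarrow> real \<Rightarrow> nat \<Rightarrow> complex mat list \<Rightarrow> nat \<Rightarrow> complex mat list \<Rightarrow> complex mat" where
  "Kp m p N X M Y = mat (N * M) (N * M) (\<lambda>(i, j). \<Sum>l. \<Sum>w\<in>words m l.
      complex_of_real (p ^ l) * kron (mpow N X w) (mat_adjoint (mpow M Y w)) $$ (i, j))"

definition vstar :: "complex vec \<Rightarrow> complex mat" where
  "vstar e = mat 1 (dim_vec e) (\<lambda>(_, j). cnj (e $ j))"

definition vcol :: "complex vec \<Rightarrow> complex mat" where
  "vcol e = mat (dim_vec e) 1 (\<lambda>(i, _). e $ i)"

text \<open>e1^* F e2 = (I_N \<otimes> e1^*) F (I_N \<otimes> e2).\<close>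
definition sandwich :: "nat \<Rightarrow> complex vec \<Rightarrow> complex mat \<Rightarrow> complex vec \<Rightarrow> complex mat" where
  "sandwich N e1 F e2 = kron (1\<^sub>m N) (vstar e1) * F * kron (1\<^sub>m N) (vcol e2)"

definition nc_function :: "nat \<Rightarrow> (nat \<times> complex mat list) set \<Rightarrow> (nat \<times> complex mat list \<Rightarrow> complex mat) \<Rightarrow> bool" where
  "nc_function m D f \<longleftrightarrow>
     (\<forall>(N, X)\<in>D. f (N, X) \<in> carrier_mat N N) \<and>
     (\<forall>(N, X)\<in>D. \<forall>(N', X')\<in>D.
        (N + N', map2 (\<lambda>A B. four_block_mat A (0\<^sub>m N N') (0\<^sub>m N' N) B) X X') \<in> D \<longrightarrow>
        f (N + N', map2 (\<lambda>A B. four_block_mat A (0\<^sub>m N N') (0\<^sub>m N' N) B) X X')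
          = four_block_mat (f (N, X)) (0\<^sub>m N N') (0\<^sub>m N' N) (f (N', X'))) \<and>
     (\<forall>(N, X)\<in>D. \<forall>S T. S \<in> carrier_mat N N \<longrightarrow> T \<in> carrier_mat N N \<longrightarrow>
        S * T = 1\<^sub>m N \<longrightarrow> T * S = 1\<^sub>m N \<longrightarrow>
        (N, map (\<lambda>A. S * A * T) X) \<in> D \<longrightarrow>
        f (N, map (\<lambda>A. S * A * T) X) = S * f (N, X) * T)"

definition ell2p :: "nat \<Rightarrow> real \<Rightarrow> (nat list \<Rightarrow> complex) \<Rightarrow> bool" where
  "ell2p m p c \<longleftrightarrow> (\<lambda>w. inverse (p ^ length w) * (cmod (c w))\<^sup>2) summable_on allwords m"

definition h2_rep :: "nat \<Rightarrow> real \<Rightarrow> (nat \<times> complex mat list \<Rightarrow> complex mat) \<Rightarrow> (nat list \<Rightarrow> complex) \<Rightarrow> bool" where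
  "h2_rep m p f c \<longleftrightarrow> ell2p m p c \<and>
     (\<forall>(N, X)\<in>upsilon m p. f (N, X) \<in> carrier_mat N N \<and>
        (\<forall>i<N. \<forall>j<N. (\<lambda>l. \<Sum>w\<in>words m l. c w * mpow N X w $$ (i, j)) sums (f (N, X) $$ (i, j))))"

definition in_H2 :: "nat \<Rightarrow> real \<Rightarrow> (nat \<times> complex mat list \<Rightarrow> complex mat) \<Rightarrow> bool" where
  "in_H2 m p f \<longleftrightarrow> nc_function m (upsilon m p) f \<and> (\<exists>c. h2_rep m p f c)"

definition h2_coef :: "nat \<Rightarrow> real \<Rightarrow> (nat \<times> complex mat list \<Rightarrow> complex mat) \<Rightarrow> nat list \<Rightarrow> complex" where
  "h2_coef m p f = (SOME c. h2_rep m p f c)"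

definition h2_inner :: "nat \<Rightarrow> real \<Rightarrow> (nat \<times> complex mat list \<Rightarrow> complex mat) \<Rightarrow> (nat \<times> complex mat list \<Rightarrow> complex mat) \<Rightarrow> complex" where
  "h2_inner m p f g = (\<Sum>\<^sub>\<infinity>w\<in>allwords m.
      complex_of_real (inverse (p ^ length w)) * h2_coef m p f w * cnj (h2_coef m p g w))"

end

theory Submission
  imports Defs "HOL-Analysis.Analysis"
begin
lemma adj_index[simp]: "i < dim_col A \<Longrightarrow> j < dim_row A \<Longrightarrow> mat_adjoint A $$ (i,j) = cnj (A $$ (j,i))"
  "dim_row (mat_adjoint A) = dim_col A" "dim_col (mat_adjoint A) = dim_row A"
  by (auto simp: mat_adjoint_def mat_of_rows_index)

lemma finite_words[simp]: "finite (words m l)"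
proof -
  have "words m l = {xs. set xs \<subseteq> {..<m} \<and> length xs = l}" by (auto simp: words_def)
  thus ?thesis using finite_lists_length_eq[of "{..<m}" l] by simp
qed

lemma allwords_UN: "allwords m = (\<Union>l. words m l)" by (auto simp: allwords_def words_def)
lemma words_disj: "disjoint_family (words m)" by (auto simp: disjoint_family_on_def words_def)
lemma words_allwords: "w \<in> words m l \<Longrightarrow> w \<in> allwords m" by (auto simp: allwords_def words_def)

lemma bylength_has_sum:
  fixes t :: "nat list \<Rightarrow> complex"
  assumes "(t has_sum S) (allwords m)"
  shows "(\<lambda>l. \<Sum>w\<in>words m l. t w) sums S"
proof -
  have inj: "inj_on snd (Sigma UNIV (words m))" by (auto simp: inj_on_def words_def)
  have im: "snd ` Sigma UNIV (words m) = allwords m"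
    by (force simp: allwords_def words_def image_iff)
  have "((t \<circ> snd) has_sum S) (Sigma UNIV (words m))"
    using assms has_sum_reindex[OF inj, of t S] im by simp
  then have "((\<lambda>l. \<Sum>w\<in>words m l. t w) has_sum S) UNIV"
    by (rule has_sum_Sigma'[where B="words m"]) (simp_all add: o_def)
  then show ?thesis by (rule has_sum_imp_sums)
qed

lemma bylength_summable:
  fixes t :: "nat list \<Rightarrow> complex"
  assumes "t summable_on (allwords m)"
  shows "(\<lambda>l. \<Sum>w\<in>words m l. t w) sums (infsum t (allwords m))"
  using assms bylength_has_sum summable_iff_has_sum_infsum by blast

lemma bylength_nonneg_summable:
  fixes g :: "nat list \<Rightarrow> real"
  assumes "\<And>w. g w \<ge> 0" "summable (\<lambda>l. \<Sum>w\<in>words m l. g w)"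
  shows "g summable_on allwords m"
proof (rule nonneg_bdd_above_summable_on)
  show "0 \<le> g w" for w by (rule assms(1))
  show "bdd_above (sum g ` {F. F \<subseteq> allwords m \<and> finite F})"
  proof (rule bdd_aboveI2)
    fix F assume F: "F \<in> {F. F \<subseteq> allwords m \<and> finite F}"
    define L where "L = Suc (Max (insert 0 (length ` F)))"
    have sub: "F \<subseteq> (\<Union>l\<in>{..<L}. words m l)"
    proof
      fix w assume "w \<in> F"
      then have "length w < L" using F unfolding L_def
        by (simp add: le_imp_less_Suc)
      with \<open>w \<in> F\<close> F show "w \<in> (\<Union>l\<in>{..<L}. words m l)"
        by (auto simp: words_def allwords_def)
    qed
    have "sum g F \<le> sum g (\<Union>l\<in>{..<L}. words m l)"
      by (rule sum_mono2) (use sub assms(1) in auto)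
    also have "\<dots> = (\<Sum>l<L. sum g (words m l))"
      by (rule sum.UNION_disjoint) (simp_all, auto simp: words_def)
    also have "\<dots> \<le> (\<Sum>l. sum g (words m l))"
      by (rule sum_le_suminf) (auto simp: assms sum_nonneg)
    finally show "sum g F \<le> (\<Sum>l. sum g (words m l))" .
  qed
qed

lemma mpow_Nil[simp]: "mpow N X [] = 1\<^sub>m N" by (simp add: mpow_def)
lemma mpow_Cons[simp]: "mpow N X (i # w) = X ! i * mpow N X w" by (simp add: mpow_def)

lemma mpow_carrier:
  assumes "ncpt m N X" "set w \<subseteq> {..<m}"
  shows "mpow N X w \<in> carrier_mat N N"
  using assms(2)
proof (induction w)
  case Nil then show ?case by simp
next
  case (Cons i w)
  then have "X ! i \<in> carrier_mat N N" using assms(1) by (auto simp: ncpt_def)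
  with Cons show ?case by auto
qed

definition SQ :: "nat \<Rightarrow> real \<Rightarrow> (nat list \<Rightarrow> complex) \<Rightarrow> bool" where
  "SQ m p g \<longleftrightarrow> (\<lambda>w. p ^ length w * (cmod (g w))\<^sup>2) summable_on allwords m"

lemma SQ_zero: "SQ m p (\<lambda>w. 0)" by (simp add: SQ_def)

lemma SQ_cmult: assumes "SQ m p g" shows "SQ m p (\<lambda>w. c * g w)"
proof -
  have "(\<lambda>w. (cmod c)\<^sup>2 * (p ^ length w * (cmod (g w))\<^sup>2)) summable_on allwords m"
    using assms unfolding SQ_def by (rule summable_on_cmult_right)
  then show ?thesis unfolding SQ_def by (simp add: norm_mult power_mult_distrib mult_ac)
qed

lemma SQ_cnj: assumes "SQ m p g" shows "SQ m p (\<lambda>w. cnj (g w))"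
  using assms by (simp add: SQ_def)

lemma SQ_add: assumes "SQ m p g" "SQ m p h" "p > 0" shows "SQ m p (\<lambda>w. g w + h w)"
proof -
  have "(\<lambda>w. 2 * (p ^ length w * (cmod (g w))\<^sup>2) + 2 * (p ^ length w * (cmod (h w))\<^sup>2)) summable_on allwords m"
    using assms unfolding SQ_def by (intro summable_on_add summable_on_cmult_right)
  then show ?thesis unfolding SQ_def
  proof (rule summable_on_comparison_test)
    fix w
    have sq: "(x+y)\<^sup>2 \<le> 2*x\<^sup>2+2*y\<^sup>2" for x y :: real
      unfolding power2_sum using sum_squares_bound[of x y] by linarith
    have "cmod (g w + h w) \<le> cmod (g w) + cmod (h w)" by (rule norm_triangle_ineq)
    then have "(cmod (g w + h w))\<^sup>2 \<le> (cmod (g w) + cmod (h w))\<^sup>2"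
      by (simp add: power_mono)
    also have "\<dots> \<le> 2 * (cmod (g w))\<^sup>2 + 2 * (cmod (h w))\<^sup>2" by (rule sq)
    finally have A: "(cmod (g w + h w))\<^sup>2 \<le> 2 * (cmod (g w))\<^sup>2 + 2 * (cmod (h w))\<^sup>2" .
    have "p ^ length w \<ge> 0" using assms by simp
    from mult_left_mono[OF A this]
    show "p ^ length w * (cmod (g w + h w))\<^sup>2
        \<le> 2 * (p ^ length w * (cmod (g w))\<^sup>2) + 2 * (p ^ length w * (cmod (h w))\<^sup>2)"
      by (simp add: algebra_simps)
    show "0 \<le> p ^ length w * (cmod (g w + h w))\<^sup>2" using assms by simp
  qed
qed

lemma SQ_sum: assumes "finite S" "\<And>i. i \<in> S \<Longrightarrow> SQ m p (g i)" "p > 0"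
  shows "SQ m p (\<lambda>w. \<Sum>i\<in>S. g i w)"
  using assms by (induction S rule: finite_induct) (auto intro!: SQ_add SQ_zero)

lemma prod_summable:
  fixes c d :: "nat list \<Rightarrow> complex"
  assumes "ell2p m p c" "SQ m p d" "p > 0"
  shows "(\<lambda>w. c w * d w) summable_on allwords m"
proof -
  have "(\<lambda>w. inverse (p ^ length w) * (cmod (c w))\<^sup>2 + p ^ length w * (cmod (d w))\<^sup>2) summable_on allwords m"
    using assms unfolding SQ_def ell2p_def by (intro summable_on_add)
  then have "(\<lambda>w. norm (c w * d w)) summable_on allwords m"
  proof (rule summable_on_comparison_test)
    fix w :: "nat list"
    define r where "r = p ^ length w"
    have r: "r > 0" using assms r_def by simp
    define x where "x = cmod (c w)"
    define y where "y = cmod (d w)"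
    have xy: "x \<ge> 0" "y \<ge> 0" by (auto simp: x_def y_def)
    have "2 * x * (r * y) \<le> x\<^sup>2 + (r * y)\<^sup>2" by (rule sum_squares_bound)
    moreover have "r * (x * y) \<le> 2 * x * (r * y)" using xy r by simp
    moreover have "2 * x * (r * y) = 2 * (r * (x * y))" "(r * y)\<^sup>2 = r * (r * y\<^sup>2)"
      by (simp_all add: algebra_simps power2_eq_square)
    ultimately have "r * (x * y) \<le> x\<^sup>2 + r * (r * y\<^sup>2)"
      by linarith
    moreover have "r * (inverse r * x\<^sup>2) = x\<^sup>2" using r by simp
    ultimately have "r * (x * y) \<le> r * (inverse r * x\<^sup>2 + r * y\<^sup>2)"
      unfolding distrib_left by linarith
    then have "x * y \<le> inverse r * x\<^sup>2 + r * y\<^sup>2"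
      using r by (simp add: mult_le_cancel_left)
    then have "cmod (c w) * cmod (d w) \<le> inverse r * (cmod (c w))\<^sup>2 + r * (cmod (d w))\<^sup>2"
      by (simp add: x_def y_def)
    then show "norm (c w * d w) \<le> inverse (p ^ length w) * (cmod (c w))\<^sup>2 + p ^ length w * (cmod (d w))\<^sup>2"
      by (simp add: r_def norm_mult)
  qed simp
  then show ?thesis by (rule abs_summable_summable)
qed

lemma ups_ncpt: "(N,X) \<in> upsilon m p \<Longrightarrow> ncpt m N X" by (simp add: upsilon_def)

lemma words_set: "w \<in> words m l \<Longrightarrow> set w \<subseteq> {..<m}" by (simp add: words_def)
lemma allwords_set: "w \<in> allwords m \<Longrightarrow> set w \<subseteq> {..<m}" by (simp add: allwords_def)

lemma adjA_diag:
  assumes "A \<in> carrier_mat N N" "b < N"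
  shows "(mat_adjoint A * A) $$ (b,b) = of_real (\<Sum>k<N. (cmod (A $$ (k,b)))\<^sup>2)"
proof -
  have "(mat_adjoint A * A) $$ (b,b) = (\<Sum>k<N. cnj (A $$ (k,b)) * A $$ (k,b))"
    using assms by (auto simp: scalar_prod_def lessThan_atLeast0 intro!: sum.cong)
  also have "\<dots> = (\<Sum>k<N. of_real ((cmod (A $$ (k,b)))\<^sup>2))"
  proof (rule sum.cong[OF refl])
    fix k
    show "cnj (A $$ (k,b)) * A $$ (k,b) = of_real ((cmod (A $$ (k,b)))\<^sup>2)"
      by (subst complex_norm_square) (rule mult.commute)
  qed
  finally show ?thesis by (simp only: of_real_sum)
qed

lemma ups_sq:
  assumes XU: "(N,X) \<in> upsilon m p" and p: "p > 0" and ab: "a < N" "b < N"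
  shows "SQ m p (\<lambda>w. mpow N X w $$ (a,b))"
proof -
  have nc: "ncpt m N X" using XU by (rule ups_ncpt)
  define R where "R l = (\<Sum>w\<in>words m l. p ^ l * (\<Sum>k<N. (cmod (mpow N X w $$ (k,b)))\<^sup>2))" for l
  have s: "summable (\<lambda>l. \<Sum>w\<in>words m l. complex_of_real (p ^ l) * (mat_adjoint (mpow N X w) * mpow N X w) $$ (b, b))"
    using XU ab unfolding upsilon_def by auto
  have "(\<lambda>l. \<Sum>w\<in>words m l. complex_of_real (p ^ l) * (mat_adjoint (mpow N X w) * mpow N X w) $$ (b, b))
      = (\<lambda>l. of_real (R l))"
  proof
    fix l
    show "(\<Sum>w\<in>words m l. complex_of_real (p ^ l) * (mat_adjoint (mpow N X w) * mpow N X w) $$ (b, b))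
      = of_real (R l)"
      unfolding R_def of_real_sum of_real_mult
      by (rule sum.cong) (auto simp: adjA_diag[OF mpow_carrier[OF nc words_set] ab(2)])
  qed
  with s have sR: "summable R" by (simp add: summable_of_real_iff)
  show ?thesis unfolding SQ_def
  proof (rule bylength_nonneg_summable)
    show "0 \<le> p ^ length w * (cmod (mpow N X w $$ (a, b)))\<^sup>2" for w using p by simp
    show "summable (\<lambda>l. \<Sum>w\<in>words m l. p ^ length w * (cmod (mpow N X w $$ (a, b)))\<^sup>2)"
    proof (rule summable_comparison_test'[OF sR])
      fix l :: nat
      have "norm (\<Sum>w\<in>words m l. p ^ length w * (cmod (mpow N X w $$ (a, b)))\<^sup>2)
          = (\<Sum>w\<in>words m l. p ^ length w * (cmod (mpow N X w $$ (a, b)))\<^sup>2)"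
        unfolding real_norm_def by (intro abs_of_nonneg sum_nonneg) (use p in auto)
      also have "\<dots> \<le> R l" unfolding R_def
      proof (rule sum_mono)
        fix w assume w: "w \<in> words m l"
        have "(cmod (mpow N X w $$ (a, b)))\<^sup>2 \<le> (\<Sum>k<N. (cmod (mpow N X w $$ (k,b)))\<^sup>2)"
          by (rule member_le_sum[where f="\<lambda>k. (cmod (mpow N X w $$ (k,b)))\<^sup>2"]) (use ab in auto)
        then show "p ^ length w * (cmod (mpow N X w $$ (a, b)))\<^sup>2 \<le> p ^ l * (\<Sum>k<N. (cmod (mpow N X w $$ (k,b)))\<^sup>2)"
          using w p by (auto simp: words_def intro!: mult_left_mono)
      qed
      finally show "norm (\<Sum>w\<in>words m l. p ^ length w * (cmod (mpow N X w $$ (a, b)))\<^sup>2) \<le> R l" .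
    qed
  qed
qed

lemma SQ_ell2p:
  assumes "SQ m p g" "p > 0"
  shows "ell2p m p (\<lambda>w. of_real (p ^ length w) * g w)"
proof -
  have e: "cmod (of_real (p ^ length w) * g w) = p ^ length w * cmod (g w)" for w
    using assms(2) by (simp add: norm_mult norm_power)
  have "inverse (p ^ length w) * (cmod (of_real (p ^ length w) * g w))\<^sup>2 = p ^ length w * (cmod (g w))\<^sup>2" for w
    unfolding e using assms(2) by (simp add: power_mult_distrib power2_eq_square field_simps)
  then show ?thesis using assms(1) unfolding ell2p_def SQ_def by simp
qed

lemma mult3_index:
  assumes "P \<in> carrier_mat n1 n2" "K \<in> carrier_mat n2 n3" "Q \<in> carrier_mat n3 n4" "i < n1" "j < n4"
  shows "(P * K * Q) $$ (i,j) = (\<Sum>c<n3. (\<Sum>d<n2. P $$ (i,d) * K $$ (d,c)) * Q $$ (c,j))"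
proof -
  have "(P*K*Q)$$(i,j) = Matrix.row (P*K) i \<bullet> Matrix.col Q j" using assms by (intro index_mult_mat(1)) auto
  also have "\<dots> = (\<Sum>c<n3. (P*K)$$(i,c) * Q$$(c,j))"
    using assms unfolding scalar_prod_def by (intro sum.cong) (auto simp: lessThan_atLeast0)
  also have "\<dots> = (\<Sum>c<n3. (\<Sum>d<n2. P $$ (i,d) * K $$ (d,c)) * Q $$ (c,j))"
  proof (rule sum.cong[OF refl])
    fix c assume "c \<in> {..<n3}"
    then have "(P*K)$$(i,c) = (\<Sum>d<n2. P $$ (i,d) * K $$ (d,c))"
      using assms by (auto simp: scalar_prod_def lessThan_atLeast0 intro!: sum.cong)
    then show "(P*K)$$(i,c) * Q$$(c,j) = (\<Sum>d<n2. P $$ (i,d) * K $$ (d,c)) * Q $$ (c,j)" by simp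
  qed
  finally show ?thesis .
qed

lemma sum_block:
  fixes g :: "nat \<Rightarrow> 'a::comm_monoid_add"
  assumes i: "i < N" and M: "0 < M"
  shows "(\<Sum>d<N*M. if d div M = i then g d else 0) = (\<Sum>a<M. g (i*M+a))"
proof -
  have "(\<Sum>d<N*M. if d div M = i then g d else 0) = sum g ({..<N*M} \<inter> {d. d div M = i})"
    by (simp add: sum.inter_restrict)
  also have "{..<N*M} \<inter> {d. d div M = i} = (\<lambda>a. i*M+a) ` {..<M}"
  proof
    show "{..<N*M} \<inter> {d. d div M = i} \<subseteq> (\<lambda>a. i*M+a) ` {..<M}"
    proof
      fix d assume "d \<in> {..<N*M} \<inter> {d. d div M = i}"
      then have "d div M = i" by simp
      then have "d = i*M + d mod M" by (metis div_mult_mod_eq)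
      moreover have "d mod M < M" using M by simp
      ultimately show "d \<in> (\<lambda>a. i*M+a) ` {..<M}" by (metis image_eqI lessThan_iff)
    qed
    show "(\<lambda>a. i*M+a) ` {..<M} \<subseteq> {..<N*M} \<inter> {d. d div M = i}"
    proof
      fix d assume "d \<in> (\<lambda>a. i*M+a) ` {..<M}"
      then obtain a where a: "a < M" "d = i*M+a" by auto
      have "Suc i * M \<le> N * M" using i by (intro mult_right_mono) auto
      then have "d < N*M" using a by simp
      moreover have "d div M = i" using a M by simp
      ultimately show "d \<in> {..<N*M} \<inter> {d. d div M = i}" by simp
    qed
  qed
  also have "sum g ((\<lambda>a. i*M+a) ` {..<M}) = (\<Sum>a<M. g (i*M+a))"
    by (subst sum.reindex) (auto simp: inj_on_def)
  finally show ?thesis .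
qed

lemma sandwich_entry:
  assumes K: "K \<in> carrier_mat (N*M) (N*M)" and e: "e1 \<in> carrier_vec M" "e2 \<in> carrier_vec M"
    and ij: "i < N" "j < N" and M: "0 < M"
  shows "sandwich N e1 K e2 $$ (i,j) = (\<Sum>a<M. \<Sum>b<M. cnj (e1$a) * K $$ (i*M+a, j*M+b) * e2$b)"
proof -
  define P where "P = kron (1\<^sub>m N) (vstar e1)"
  define Q where "Q = kron (1\<^sub>m N) (vcol e2)"
  have Pc: "P \<in> carrier_mat N (N*M)" using e by (simp add: P_def kron_def vstar_def)
  have Qc: "Q \<in> carrier_mat (N*M) N" using e by (simp add: Q_def kron_def vcol_def)
  have Pi: "P $$ (i,d) = (if d div M = i then cnj (e1 $ (d mod M)) else 0)" if "d < N*M" for d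
  proof -
    have "d div M < N" using that by (simp add: less_mult_imp_div_less)
    moreover have "d mod M < M" using M by simp
    ultimately show ?thesis using that ij e by (auto simp: P_def kron_def vstar_def)
  qed
  have Qi: "Q $$ (c,j) = (if c div M = j then e2 $ (c mod M) else 0)" if "c < N*M" for c
  proof -
    have "c div M < N" using that by (simp add: less_mult_imp_div_less)
    moreover have "c mod M < M" using M by simp
    ultimately show ?thesis using that ij e by (auto simp: Q_def kron_def vcol_def)
  qed
  have "sandwich N e1 K e2 $$ (i,j) = (\<Sum>c<N*M. (\<Sum>d<N*M. P $$ (i,d) * K $$ (d,c)) * Q $$ (c,j))"
    unfolding sandwich_def P_def[symmetric] Q_def[symmetric] by (rule mult3_index[OF Pc K Qc ij])
  also have "\<dots> = (\<Sum>c<N*M. if c div M = j then (\<Sum>a<M. cnj (e1$a) * K $$ (i*M+a, c)) * e2 $ (c mod M) else 0)"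
  proof (rule sum.cong[OF refl])
    fix c assume c: "c \<in> {..<N*M}"
    have "(\<Sum>d<N*M. P $$ (i,d) * K $$ (d,c)) = (\<Sum>d<N*M. if d div M = i then cnj (e1 $ (d mod M)) * K $$ (d,c) else 0)"
      by (rule sum.cong) (auto simp: Pi)
    also have "\<dots> = (\<Sum>a<M. cnj (e1 $ ((i*M+a) mod M)) * K $$ (i*M+a,c))"
      by (rule sum_block[OF ij(1) M])
    also have "\<dots> = (\<Sum>a<M. cnj (e1$a) * K $$ (i*M+a, c))" by simp
    finally show "(\<Sum>d<N*M. P $$ (i,d) * K $$ (d,c)) * Q $$ (c,j) =
      (if c div M = j then (\<Sum>a<M. cnj (e1$a) * K $$ (i*M+a, c)) * e2 $ (c mod M) else 0)"
      using c by (simp add: Qi)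
  qed
  also have "\<dots> = (\<Sum>b<M. (\<Sum>a<M. cnj (e1$a) * K $$ (i*M+a, j*M+b)) * e2 $ ((j*M+b) mod M))"
    by (rule sum_block[OF ij(2) M])
  also have "\<dots> = (\<Sum>b<M. \<Sum>a<M. cnj (e1$a) * K $$ (i*M+a, j*M+b) * e2$b)"
    by (simp add: sum_distrib_right)
  also have "\<dots> = (\<Sum>a<M. \<Sum>b<M. cnj (e1$a) * K $$ (i*M+a, j*M+b) * e2$b)"
    by (rule sum.swap)
  finally show ?thesis .
qed

lemma has_sum_fsum:
  fixes f :: "'i \<Rightarrow> 'a \<Rightarrow> complex"
  assumes "finite S" "\<And>i. i \<in> S \<Longrightarrow> (f i has_sum s i) A"
  shows "((\<lambda>x. \<Sum>i\<in>S. f i x) has_sum (\<Sum>i\<in>S. s i)) A"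
  using assms by (induction S rule: finite_induct) (auto intro!: has_sum_add)

lemma T_summable:
  assumes XU: "(N,X) \<in> upsilon m p" and YU: "(M,Y) \<in> upsilon m p" and p: "p > 0"
    and "i < N" "j < N" "a < M" "b < M"
  shows "(\<lambda>w. of_real (p^length w) * mpow N X w $$ (i,j) * cnj (mpow M Y w $$ (b,a))) summable_on allwords m"
  using prod_summable[OF SQ_ell2p[OF ups_sq[OF XU p] p] SQ_cnj[OF ups_sq[OF YU p]] p] assms by simp

lemma lt_block: "(i::nat) < N \<Longrightarrow> a < M \<Longrightarrow> i*M+a < N*M"
proof -
  assume "i < N" "a < M"
  then have "Suc i * M \<le> N * M" by (intro mult_right_mono) auto
  with \<open>a < M\<close> show ?thesis by simp
qed

lemma Kp_entry:
  assumes XU: "(N,X) \<in> upsilon m p" and YU: "(M,Y) \<in> upsilon m p" and p: "p > 0"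
    and ij: "i < N" "j < N" and ab: "a < M" "b < M"
  shows "((\<lambda>w. of_real (p^length w) * mpow N X w $$ (i,j) * cnj (mpow M Y w $$ (b,a)))
           has_sum (Kp m p N X M Y $$ (i*M+a, j*M+b))) (allwords m)"
proof -
  define T where "T w = of_real (p^length w) * mpow N X w $$ (i,j) * cnj (mpow M Y w $$ (b,a))" for w
  have ncX: "ncpt m N X" using XU by (rule ups_ncpt)
  have ncY: "ncpt m M Y" using YU by (rule ups_ncpt)
  have M: "0 < M" using ab by simp
  obtain S where S: "(T has_sum S) (allwords m)"
    using T_summable[OF XU YU p ij ab] unfolding T_def summable_on_def by blast
  have ser: "(\<lambda>l. \<Sum>w\<in>words m l. T w) sums S" by (rule bylength_has_sum[OF S])
  have eq: "(\<Sum>w\<in>words m l. complex_of_real (p ^ l) * kron (mpow N X w) (mat_adjoint (mpow M Y w)) $$ (i*M+a, j*M+b))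
      = (\<Sum>w\<in>words m l. T w)" for l
  proof (rule sum.cong[OF refl])
    fix w assume w: "w \<in> words m l"
    have cX: "mpow N X w \<in> carrier_mat N N" by (rule mpow_carrier[OF ncX words_set[OF w]])
    have cY: "mpow M Y w \<in> carrier_mat M M" by (rule mpow_carrier[OF ncY words_set[OF w]])
    have l: "length w = l" using w by (simp add: words_def)
    have d1: "(i*M+a) div M = i" "(i*M+a) mod M = a" "(j*M+b) div M = j" "(j*M+b) mod M = b"
      using ab by auto
    show "complex_of_real (p ^ l) * kron (mpow N X w) (mat_adjoint (mpow M Y w)) $$ (i*M+a, j*M+b) = T w"
      using cX cY lt_block[OF ij(1) ab(1)] lt_block[OF ij(2) ab(2)] ab
      by (simp add: kron_def d1 T_def l)
  qed
  have "Kp m p N X M Y $$ (i*M+a, j*M+b) = (\<Sum>l. \<Sum>w\<in>words m l. complex_of_real (p ^ l) * kron (mpow N X w) (mat_adjoint (mpow M Y w)) $$ (i*M+a, j*M+b))"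
    using lt_block[OF ij(1) ab(1)] lt_block[OF ij(2) ab(2)]
    by (simp add: Kp_def)
  also have "\<dots> = (\<Sum>l. \<Sum>w\<in>words m l. T w)" by (simp only: eq)
  also have "\<dots> = S" using ser by (rule sums_unique[symmetric])
  finally show ?thesis using S unfolding T_def by simp
qed

definition dco :: "real \<Rightarrow> nat \<Rightarrow> complex mat list \<Rightarrow> complex Matrix.vec \<Rightarrow> complex Matrix.vec \<Rightarrow> nat list \<Rightarrow> complex" where
  "dco p M Y e1 e2 w = of_real (p ^ length w) * (\<Sum>a<M. \<Sum>b<M. e2$a * cnj (mpow M Y w $$ (a,b)) * cnj (e1$b))"

lemma dco_SQ:
  assumes YU: "(M,Y) \<in> upsilon m p" and p: "p > 0"
  shows "SQ m p (\<lambda>w. \<Sum>a<M. \<Sum>b<M. e2$a * cnj (mpow M Y w $$ (a,b)) * cnj (e1$b))"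
proof -
  have "SQ m p (\<lambda>w. \<Sum>a<M. \<Sum>b<M. (e2$a * cnj (e1$b)) * cnj (mpow M Y w $$ (a,b)))"
    by (intro SQ_sum SQ_cmult SQ_cnj ups_sq[OF YU p] finite_lessThan p) auto
  then show ?thesis by (simp add: mult_ac)
qed

lemma dco_ell2p:
  assumes YU: "(M,Y) \<in> upsilon m p" and p: "p > 0"
  shows "ell2p m p (dco p M Y e1 e2)"
  using SQ_ell2p[OF dco_SQ[OF YU p] p] unfolding dco_def[abs_def] .

lemma F_entry:
  assumes XU: "(N,X) \<in> upsilon m p" and YU: "(M,Y) \<in> upsilon m p" and p: "p > 0"
    and e: "e1 \<in> carrier_vec M" "e2 \<in> carrier_vec M" and ij: "i < N" "j < N" and M: "0 < M"
  shows "((\<lambda>w. dco p M Y e1 e2 w * mpow N X w $$ (i,j))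
           has_sum (sandwich N e1 (Kp m p N X M Y) e2 $$ (i,j))) (allwords m)"
proof -
  have Kc: "Kp m p N X M Y \<in> carrier_mat (N*M) (N*M)" by (simp add: Kp_def)
  have "((\<lambda>w. \<Sum>a<M. \<Sum>b<M. cnj (e1$a) * (of_real (p^length w) * mpow N X w $$ (i,j) * cnj (mpow M Y w $$ (b,a))) * e2$b)
      has_sum (\<Sum>a<M. \<Sum>b<M. cnj (e1$a) * Kp m p N X M Y $$ (i*M+a, j*M+b) * e2$b)) (allwords m)"
    by (intro has_sum_fsum finite_lessThan has_sum_cmult_left has_sum_cmult_right Kp_entry[OF XU YU p ij]) auto
  moreover have "(\<Sum>a<M. \<Sum>b<M. cnj (e1$a) * (of_real (p^length w) * mpow N X w $$ (i,j) * cnj (mpow M Y w $$ (b,a))) * e2$b)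
      = dco p M Y e1 e2 w * mpow N X w $$ (i,j)" for w
  proof -
    have "(\<Sum>a<M. \<Sum>b<M. cnj (e1$a) * (of_real (p^length w) * mpow N X w $$ (i,j) * cnj (mpow M Y w $$ (b,a))) * e2$b)
      = (\<Sum>b<M. \<Sum>a<M. cnj (e1$a) * (of_real (p^length w) * mpow N X w $$ (i,j) * cnj (mpow M Y w $$ (b,a))) * e2$b)"
      by (rule sum.swap)
    also have "\<dots> = of_real (p ^ length w) * (\<Sum>b<M. \<Sum>a<M. e2$b * cnj (mpow M Y w $$ (b,a)) * cnj (e1$a)) * mpow N X w $$ (i,j)"
      by (simp add: sum_distrib_left sum_distrib_right mult_ac)
    finally show ?thesis by (simp add: dco_def)
  qed
  ultimately show ?thesis using sandwich_entry[OF Kc e ij M] by simp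
qed

lemma mpow_block:
  assumes X: "ncpt m N X" and X': "ncpt m N' X'" and w: "set w \<subseteq> {..<m}"
  shows "mpow (N+N') (map2 (\<lambda>A B. four_block_mat A (0\<^sub>m N N') (0\<^sub>m N' N) B) X X') w
       = four_block_mat (mpow N X w) (0\<^sub>m N N') (0\<^sub>m N' N) (mpow N' X' w)"
  using w
proof (induction w)
  case Nil then show ?case by simp
next
  case (Cons i w)
  have i: "i < m" and w: "set w \<subseteq> {..<m}" using Cons.prems by auto
  have len: "length X = m" "length X' = m" using X X' by (auto simp: ncpt_def)
  have cXi: "X ! i \<in> carrier_mat N N" using X i len by (auto simp: ncpt_def)
  have cXi': "X' ! i \<in> carrier_mat N' N'" using X' i len by (auto simp: ncpt_def)
  have cW: "mpow N X w \<in> carrier_mat N N" by (rule mpow_carrier[OF X w])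
  have cW': "mpow N' X' w \<in> carrier_mat N' N'" by (rule mpow_carrier[OF X' w])
  have nth: "map2 (\<lambda>A B. four_block_mat A (0\<^sub>m N N') (0\<^sub>m N' N) B) X X' ! i
      = four_block_mat (X ! i) (0\<^sub>m N N') (0\<^sub>m N' N) (X' ! i)"
    using i len by simp
  have z1: "X!i * 0\<^sub>m N N' = 0\<^sub>m N N'" by (rule right_mult_zero_mat[OF cXi])
  have z2: "0\<^sub>m N N' * mpow N' X' w = 0\<^sub>m N N'" by (rule left_mult_zero_mat[OF cW'])
  have z3: "0\<^sub>m N' N * mpow N X w = 0\<^sub>m N' N" by (rule left_mult_zero_mat[OF cW])
  have z4: "X'!i * 0\<^sub>m N' N = 0\<^sub>m N' N" by (rule right_mult_zero_mat[OF cXi'])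
  have c1: "X!i * mpow N X w \<in> carrier_mat N N" using cXi cW by simp
  have c2: "X'!i * mpow N' X' w \<in> carrier_mat N' N'" using cXi' cW' by simp
  have "mpow (N+N') (map2 (\<lambda>A B. four_block_mat A (0\<^sub>m N N') (0\<^sub>m N' N) B) X X') (i # w)
    = four_block_mat (X ! i) (0\<^sub>m N N') (0\<^sub>m N' N) (X' ! i) * four_block_mat (mpow N X w) (0\<^sub>m N N') (0\<^sub>m N' N) (mpow N' X' w)"
    using Cons.IH[OF w] nth by simp
  also have "\<dots> = four_block_mat (X ! i * mpow N X w + 0\<^sub>m N N' * 0\<^sub>m N' N) (X ! i * 0\<^sub>m N N' + 0\<^sub>m N N' * mpow N' X' w)
      (0\<^sub>m N' N * mpow N X w + X' ! i * 0\<^sub>m N' N) (0\<^sub>m N' N * 0\<^sub>m N N' + X' ! i * mpow N' X' w)"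
    by (rule mult_four_block_mat[OF cXi _ _ cXi' cW _ _ cW']) auto
  also have "\<dots> = four_block_mat (mpow N X (i#w)) (0\<^sub>m N N') (0\<^sub>m N' N) (mpow N' X' (i#w))"
    using c1 c2 by (simp add: z1 z2 z3 z4)
  finally show ?case .
qed

lemma mpow_sim:
  assumes X: "ncpt m N X" and S: "S \<in> carrier_mat N N" and T: "T \<in> carrier_mat N N"
    and ST: "S * T = 1\<^sub>m N" and TS: "T * S = 1\<^sub>m N" and w: "set w \<subseteq> {..<m}"
  shows "mpow N (map (\<lambda>A. S * A * T) X) w = S * mpow N X w * T"
  using w
proof (induction w)
  case Nil then show ?case using ST S by simp
next
  case (Cons i w)
  have i: "i < m" and w: "set w \<subseteq> {..<m}" using Cons.prems by auto
  have len: "length X = m" using X by (auto simp: ncpt_def)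
  have cXi: "X ! i \<in> carrier_mat N N" using X i len by (auto simp: ncpt_def)
  have cW: "mpow N X w \<in> carrier_mat N N" by (rule mpow_carrier[OF X w])
  have TSQ: "T * (S * Q) = Q" if "Q \<in> carrier_mat N n" for Q n
  proof -
    have "T * (S * Q) = (T * S) * Q" using that S T by simp
    also have "\<dots> = Q" using TS that by simp
    finally show ?thesis .
  qed
  have e1: "S * X!i * T = S * (X!i * T)" using S T cXi by simp
  have e2: "S * mpow N X w * T = S * (mpow N X w * T)" using S T cW by simp
  have a1: "(S * (X ! i * T)) * (S * (mpow N X w * T)) = S * ((X ! i * T) * (S * (mpow N X w * T)))"
    by (rule assoc_mult_mat[of S N N "X ! i * T" N "S * (mpow N X w * T)" N]) (use S T cXi cW in auto)
  have a2: "(X ! i * T) * (S * (mpow N X w * T)) = X ! i * (T * (S * (mpow N X w * T)))"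
    by (rule assoc_mult_mat[of "X ! i" N N T N "S * (mpow N X w * T)" N]) (use S T cXi cW in auto)
  have a3: "T * (S * (mpow N X w * T)) = mpow N X w * T"
    using TSQ[of "mpow N X w * T" N] cW T by simp
  have c5: "X ! i * mpow N X w \<in> carrier_mat N N" using cXi cW by simp
  have a4: "S * mpow N X (i # w) * T = S * (X ! i * (mpow N X w * T))"
  proof -
    have "S * mpow N X (i # w) * T = S * ((X ! i * mpow N X w) * T)"
      using assoc_mult_mat[OF S c5 T] by simp
    also have "(X ! i * mpow N X w) * T = X ! i * (mpow N X w * T)"
      using assoc_mult_mat[OF cXi cW T] .
    finally show ?thesis .
  qed
  have "mpow N (map (\<lambda>A. S * A * T) X) (i # w) = (S * X ! i * T) * (S * mpow N X w * T)"
    using Cons.IH[OF w] i len by simp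
  also have "\<dots> = S * (X ! i * (mpow N X w * T))" unfolding e1 e2 a1 a2 a3 ..
  also have "\<dots> = S * mpow N X (i # w) * T" using a4 by simp
  finally show ?case .
qed

lemma sandwich_carrier: "sandwich N e1 K e2 \<in> carrier_mat N N"
  unfolding sandwich_def carrier_mat_def kron_def vstar_def vcol_def by simp

locale FF =
  fixes m :: nat and p :: real and M :: nat and Y :: "complex mat list" and e1 e2 :: "complex Matrix.vec"
  assumes YU: "(M,Y) \<in> upsilon m p" and p: "p > 0" and M: "M > 0"
    and e: "e1 \<in> carrier_vec M" "e2 \<in> carrier_vec M"
begin

definition Fm :: "nat \<Rightarrow> complex mat list \<Rightarrow> complex mat" where
  "Fm N X = sandwich N e1 (Kp m p N X M Y) e2"

lemma Fm_carrier: "Fm N X \<in> carrier_mat N N"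
  unfolding Fm_def by (rule sandwich_carrier)

lemma Fm_has_sum:
  assumes XU: "(N,X) \<in> upsilon m p" and ij: "i < N" "j < N"
  shows "((\<lambda>w. dco p M Y e1 e2 w * mpow N X w $$ (i,j)) has_sum (Fm N X $$ (i,j))) (allwords m)"
  unfolding Fm_def by (rule F_entry[OF XU YU p e ij M])

lemma Fm_val:
  assumes XU: "(N,X) \<in> upsilon m p" and ij: "i < N" "j < N"
  shows "Fm N X $$ (i,j) = infsum (\<lambda>w. dco p M Y e1 e2 w * mpow N X w $$ (i,j)) (allwords m)"
  using Fm_has_sum[OF assms] by (simp add: infsumI)

lemma Fm_block:
  assumes XU: "(N,X) \<in> upsilon m p" and X'U: "(N',X') \<in> upsilon m p"
    and ZU: "(N+N', map2 (\<lambda>A B. four_block_mat A (0\<^sub>m N N') (0\<^sub>m N' N) B) X X') \<in> upsilon m p"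
  shows "Fm (N+N') (map2 (\<lambda>A B. four_block_mat A (0\<^sub>m N N') (0\<^sub>m N' N) B) X X')
       = four_block_mat (Fm N X) (0\<^sub>m N N') (0\<^sub>m N' N) (Fm N' X')"
proof (rule eq_matI)
  define Z where "Z = map2 (\<lambda>A B. four_block_mat A (0\<^sub>m N N') (0\<^sub>m N' N) B) X X'"
  have ncX: "ncpt m N X" using XU by (rule ups_ncpt)
  have ncX': "ncpt m N' X'" using X'U by (rule ups_ncpt)
  have cF: "Fm N X \<in> carrier_mat N N" "Fm N' X' \<in> carrier_mat N' N'" "Fm (N+N') Z \<in> carrier_mat (N+N') (N+N')"
    by (rule Fm_carrier)+
  show "dim_row (Fm (N+N') (map2 (\<lambda>A B. four_block_mat A (0\<^sub>m N N') (0\<^sub>m N' N) B) X X'))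
      = dim_row (four_block_mat (Fm N X) (0\<^sub>m N N') (0\<^sub>m N' N) (Fm N' X'))"
    using cF unfolding Z_def by simp
  show "dim_col (Fm (N+N') (map2 (\<lambda>A B. four_block_mat A (0\<^sub>m N N') (0\<^sub>m N' N) B) X X'))
      = dim_col (four_block_mat (Fm N X) (0\<^sub>m N N') (0\<^sub>m N' N) (Fm N' X'))"
    using cF unfolding Z_def by simp
  fix i j
  assume "i < dim_row (four_block_mat (Fm N X) (0\<^sub>m N N') (0\<^sub>m N' N) (Fm N' X'))"
    "j < dim_col (four_block_mat (Fm N X) (0\<^sub>m N N') (0\<^sub>m N' N) (Fm N' X'))"
  then have ij: "i < N+N'" "j < N+N'" using cF by auto
  have entry: "mpow (N+N') Z w $$ (i,j) = (if i<N then if j<N then mpow N X w $$ (i,j) else 0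
      else if j<N then 0 else mpow N' X' w $$ (i-N, j-N))" if w: "w \<in> allwords m" for w
  proof -
    have cW: "mpow N X w \<in> carrier_mat N N" by (rule mpow_carrier[OF ncX allwords_set[OF w]])
    have cW': "mpow N' X' w \<in> carrier_mat N' N'" by (rule mpow_carrier[OF ncX' allwords_set[OF w]])
    show ?thesis unfolding Z_def mpow_block[OF ncX ncX' allwords_set[OF w]]
      using cW cW' ij by simp
  qed
  have L: "Fm (N+N') Z $$ (i,j) = infsum (\<lambda>w. dco p M Y e1 e2 w * (if i<N then if j<N then mpow N X w $$ (i,j) else 0
      else if j<N then 0 else mpow N' X' w $$ (i-N, j-N))) (allwords m)"
    unfolding Fm_val[OF ZU[folded Z_def] ij] by (rule infsum_cong) (simp add: entry)
  show "Fm (N+N') (map2 (\<lambda>A B. four_block_mat A (0\<^sub>m N N') (0\<^sub>m N' N) B) X X') $$ (i,j)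
      = four_block_mat (Fm N X) (0\<^sub>m N N') (0\<^sub>m N' N) (Fm N' X') $$ (i,j)"
    unfolding Z_def[symmetric] L using cF ij
    by (auto simp: Fm_val[OF XU] Fm_val[OF X'U])
qed

lemma Fm_sim:
  assumes XU: "(N,X) \<in> upsilon m p" and S: "S \<in> carrier_mat N N" and T: "T \<in> carrier_mat N N"
    and ST: "S * T = 1\<^sub>m N" and TS: "T * S = 1\<^sub>m N"
    and SU: "(N, map (\<lambda>A. S * A * T) X) \<in> upsilon m p"
  shows "Fm N (map (\<lambda>A. S * A * T) X) = S * Fm N X * T"
proof (rule eq_matI)
  have ncX: "ncpt m N X" using XU by (rule ups_ncpt)
  have cF: "Fm N X \<in> carrier_mat N N" "Fm N (map (\<lambda>A. S * A * T) X) \<in> carrier_mat N N"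
    by (rule Fm_carrier)+
  show "dim_row (Fm N (map (\<lambda>A. S * A * T) X)) = dim_row (S * Fm N X * T)" using cF S by simp
  show "dim_col (Fm N (map (\<lambda>A. S * A * T) X)) = dim_col (S * Fm N X * T)" using cF T by simp
  fix i j assume "i < dim_row (S * Fm N X * T)" "j < dim_col (S * Fm N X * T)"
  then have ij: "i < N" "j < N" using S T by auto
  let ?d = "dco p M Y e1 e2"
  have H: "((\<lambda>w. \<Sum>c<N. (\<Sum>d<N. S $$ (i,d) * (?d w * mpow N X w $$ (d,c))) * T $$ (c,j))
      has_sum (\<Sum>c<N. (\<Sum>d<N. S $$ (i,d) * Fm N X $$ (d,c)) * T $$ (c,j))) (allwords m)"
    by (intro has_sum_fsum finite_lessThan has_sum_cmult_left has_sum_cmult_right Fm_has_sum[OF XU]) auto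
  have eqw: "?d w * mpow N (map (\<lambda>A. S * A * T) X) w $$ (i,j)
      = (\<Sum>c<N. (\<Sum>d<N. S $$ (i,d) * (?d w * mpow N X w $$ (d,c))) * T $$ (c,j))" if w: "w \<in> allwords m" for w
  proof -
    have cW: "mpow N X w \<in> carrier_mat N N" by (rule mpow_carrier[OF ncX allwords_set[OF w]])
    have inner: "(\<Sum>d<N. S $$ (i,d) * (?d w * mpow N X w $$ (d,c))) = ?d w * (\<Sum>d<N. S $$ (i,d) * mpow N X w $$ (d,c))" for c
      by (simp add: sum_distrib_left mult.left_commute)
    have "?d w * mpow N (map (\<lambda>A. S * A * T) X) w $$ (i,j)
        = ?d w * (\<Sum>c<N. (\<Sum>d<N. S $$ (i,d) * mpow N X w $$ (d,c)) * T $$ (c,j))"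
      unfolding mpow_sim[OF ncX S T ST TS allwords_set[OF w]] mult3_index[OF S cW T ij] ..
    also have "\<dots> = (\<Sum>c<N. ?d w * ((\<Sum>d<N. S $$ (i,d) * mpow N X w $$ (d,c)) * T $$ (c,j)))"
      by (rule sum_distrib_left)
    also have "\<dots> = (\<Sum>c<N. (\<Sum>d<N. S $$ (i,d) * (?d w * mpow N X w $$ (d,c))) * T $$ (c,j))"
      unfolding inner by (simp only: mult.assoc)
    finally show ?thesis .
  qed
  have G: "((\<lambda>w. ?d w * mpow N (map (\<lambda>A. S * A * T) X) w $$ (i,j))
      has_sum (\<Sum>c<N. (\<Sum>d<N. S $$ (i,d) * Fm N X $$ (d,c)) * T $$ (c,j))) (allwords m)"
    by (rule iffD2[OF has_sum_cong H]) (rule eqw)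
  have "Fm N (map (\<lambda>A. S * A * T) X) $$ (i,j) = (\<Sum>c<N. (\<Sum>d<N. S $$ (i,d) * Fm N X $$ (d,c)) * T $$ (c,j))"
    by (rule has_sum_unique[OF Fm_has_sum[OF SU ij] G])
  also have "\<dots> = (S * Fm N X * T) $$ (i,j)" by (rule mult3_index[OF S cF(1) T ij, symmetric])
  finally show "Fm N (map (\<lambda>A. S * A * T) X) $$ (i,j) = (S * Fm N X * T) $$ (i,j)" .
qed

lemma Fm_nc: "nc_function m (upsilon m p) (\<lambda>(N, X). sandwich N e1 (Kp m p N X M Y) e2)"
  unfolding nc_function_def Fm_def[symmetric]
  using Fm_carrier Fm_block Fm_sim by auto

end

definition Xw :: "nat \<Rightarrow> nat list \<Rightarrow> complex mat list" where
  "Xw m w = map (\<lambda>i. Matrix.mat (Suc (length w)) (Suc (length w))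
      (\<lambda>(a,c). if c = Suc a \<and> a < length w \<and> w!a = i then 1 else 0)) [0..<m]"

lemma Xw_ncpt: "ncpt m (Suc (length w)) (Xw m w)" by (auto simp: ncpt_def Xw_def)

lemma Xw_mpow:
  assumes "set v \<subseteq> {..<m}" "a < Suc (length w)" "b < Suc (length w)"
  shows "mpow (Suc (length w)) (Xw m w) v $$ (a,b)
     = (if b = a + length v \<and> (\<forall>k<length v. w!(a+k) = v!k) then 1 else 0)"
  using assms
proof (induction v arbitrary: a)
  case Nil then show ?case by simp
next
  case (Cons i v)
  define N where "N = Suc (length w)"
  have i: "i < m" and v: "set v \<subseteq> {..<m}" using Cons.prems by auto
  have cV: "mpow N (Xw m w) v \<in> carrier_mat N N" unfolding N_def by (rule mpow_carrier[OF Xw_ncpt v])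
  have cXi: "Xw m w ! i \<in> carrier_mat N N" using i by (simp add: Xw_def N_def)
  have Xi: "Xw m w ! i $$ (a,c) = (if c = Suc a \<and> a < length w \<and> w!a = i then 1 else 0)" if "c < N" for c
    using i that Cons.prems(2) by (simp add: Xw_def N_def)
  have "mpow N (Xw m w) (i # v) $$ (a,b) = (\<Sum>c<N. Xw m w ! i $$ (a,c) * mpow N (Xw m w) v $$ (c,b))"
    using cV cXi Cons.prems(2,3) unfolding N_def
    by (auto simp: scalar_prod_def lessThan_atLeast0 intro!: sum.cong)
  also have "\<dots> = (\<Sum>c<N. if c = Suc a then (if a < length w \<and> w!a = i then mpow N (Xw m w) v $$ (c,b) else 0) else 0)"
    by (rule sum.cong) (auto simp: Xi)
  also have "\<dots> = (if a < length w \<and> w!a = i then mpow N (Xw m w) v $$ (Suc a,b) else 0)"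
    by (simp add: N_def)
  also have "\<dots> = (if b = a + length (i # v) \<and> (\<forall>k<length (i # v). w!(a+k) = (i # v)!k) then 1 else 0)"
  proof (cases "a < length w \<and> w!a = i")
    case True
    then have "Suc a < Suc (length w)" by simp
    from Cons.IH[OF v this Cons.prems(3)] True show ?thesis
      unfolding N_def by (auto simp: All_less_Suc2 less_Suc_eq_0_disj)
  next
    case False
    then show ?thesis using Cons.prems(3) by (auto simp: All_less_Suc2)
  qed
  finally show ?case unfolding N_def .
qed

lemma Xw_zero:
  assumes v: "set v \<subseteq> {..<m}" and len: "length v > length w"
  shows "mpow (Suc (length w)) (Xw m w) v = 0\<^sub>m (Suc (length w)) (Suc (length w))"
proof (rule eq_matI)
  have c: "mpow (Suc (length w)) (Xw m w) v \<in> carrier_mat (Suc (length w)) (Suc (length w))"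
    by (rule mpow_carrier[OF Xw_ncpt v])
  then show "dim_row (mpow (Suc (length w)) (Xw m w) v) = dim_row (0\<^sub>m (Suc (length w)) (Suc (length w)))"
    "dim_col (mpow (Suc (length w)) (Xw m w) v) = dim_col (0\<^sub>m (Suc (length w)) (Suc (length w)))" by auto
  fix a b assume "a < dim_row (0\<^sub>m (Suc (length w)) (Suc (length w)))" "b < dim_col (0\<^sub>m (Suc (length w)) (Suc (length w)))"
  then have ab: "a < Suc (length w)" "b < Suc (length w)" by auto
  show "mpow (Suc (length w)) (Xw m w) v $$ (a,b) = 0\<^sub>m (Suc (length w)) (Suc (length w)) $$ (a,b)"
    using Xw_mpow[OF v ab] ab len by auto
qed

lemma Xw_ups: "(Suc (length w), Xw m w) \<in> upsilon m p"
  unfolding upsilon_def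
proof (clarify, intro conjI allI impI)
  show "ncpt m (Suc (length w)) (Xw m w)" by (rule Xw_ncpt)
  fix i j assume ij: "i < Suc (length w)" "j < Suc (length w)"
  show "summable (\<lambda>l. \<Sum>v\<in>words m l. complex_of_real (p ^ l) *
      (mat_adjoint (mpow (Suc (length w)) (Xw m w) v) * mpow (Suc (length w)) (Xw m w) v) $$ (i, j))"
  proof (rule summable_finite[of "{..length w}"])
    fix l assume "l \<notin> {..length w}"
    then have l: "l > length w" by simp
    show "(\<Sum>v\<in>words m l. complex_of_real (p ^ l) *
      (mat_adjoint (mpow (Suc (length w)) (Xw m w) v) * mpow (Suc (length w)) (Xw m w) v) $$ (i, j)) = 0"
    proof (rule sum.neutral, rule ballI)
      fix v assume v: "v \<in> words m l"
      have z: "mpow (Suc (length w)) (Xw m w) v = 0\<^sub>m (Suc (length w)) (Suc (length w))"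
        by (rule Xw_zero) (use v l in \<open>auto simp: words_def\<close>)
      show "complex_of_real (p ^ l) *
        (mat_adjoint (mpow (Suc (length w)) (Xw m w) v) * mpow (Suc (length w)) (Xw m w) v) $$ (i, j) = 0"
        unfolding z using ij by simp
    qed
  qed simp
qed

lemma coef_unique:
  assumes c1: "h2_rep m p g c1" and c2: "h2_rep m p g c2" and w: "w \<in> allwords m"
  shows "c1 w = c2 w"
proof -
  define L where "L = length w"
  define X where "X = Xw m w"
  have XU: "(Suc L, X) \<in> upsilon m p" unfolding L_def X_def by (rule Xw_ups)
  have key: "g (Suc L, X) $$ (0, L) = c w" if c: "h2_rep m p g c" for c
  proof -
    have s: "(\<lambda>l. \<Sum>v\<in>words m l. c v * mpow (Suc L) X v $$ (0, L)) sums (g (Suc L, X) $$ (0, L))"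
      using c XU unfolding h2_rep_def by auto
    have eq: "(\<Sum>v\<in>words m l. c v * mpow (Suc L) X v $$ (0, L)) = (if l = L then c w else 0)" for l
    proof -
      have "(\<Sum>v\<in>words m l. c v * mpow (Suc L) X v $$ (0, L)) = (\<Sum>v\<in>words m l. if v = w then c v else 0)"
      proof (rule sum.cong[OF refl])
        fix v assume v: "v \<in> words m l"
        have "mpow (Suc L) X v $$ (0, L) = (if L = length v \<and> (\<forall>k<length v. w!k = v!k) then 1 else 0)"
          unfolding X_def L_def by (subst Xw_mpow) (use v in \<open>auto simp: words_def\<close>)
        also have "\<dots> = (if v = w then 1 else 0)"
          unfolding L_def by (auto intro: nth_equalityI)
        finally show "c v * mpow (Suc L) X v $$ (0, L) = (if v = w then c v else 0)" by simp
      qed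
      also have "\<dots> = (if w \<in> words m l then c w else 0)"
        by (simp add: sum.delta')
      also have "\<dots> = (if l = L then c w else 0)"
        using w unfolding L_def by (auto simp: words_def allwords_def)
      finally show ?thesis .
    qed
    have "(\<lambda>l. if l = L then c w else 0) sums c w" using sums_single[of L "\<lambda>_. c w"] by simp
    with s show ?thesis unfolding eq using sums_unique2 by blast
  qed
  show ?thesis using key[OF c1] key[OF c2] by simp
qed

theorem proposition3p14:
  fixes m M :: nat and p :: real and Y :: "complex mat list"
  assumes "p > 0" and "M > 0" and "(M, Y) \<in> upsilon m p"
  shows "(\<forall>e1 e2. e1 \<in> carrier_vec M \<longrightarrow> e2 \<in> carrier_vec M \<longrightarrow>
            in_H2 m p (\<lambda>(N, X). sandwich N e1 (Kp m p N X M Y) e2))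
       \<and> (\<forall>e1 e2 f. e1 \<in> carrier_vec M \<longrightarrow> e2 \<in> carrier_vec M \<longrightarrow> in_H2 m p f \<longrightarrow>
            h2_inner m p f (\<lambda>(N, X). sandwich N e1 (Kp m p N X M Y) e2)
              = (vstar e2 * f (M, Y) * vcol e1) $$ (0, 0))"
proof -
  note p = assms(1) and M = assms(2) and YU = assms(3)
  have rep: "h2_rep m p (\<lambda>(N, X). sandwich N e1 (Kp m p N X M Y) e2) (dco p M Y e1 e2)"
    if e: "e1 \<in> carrier_vec M" "e2 \<in> carrier_vec M" for e1 e2
  proof -
    interpret FF m p M Y e1 e2 by unfold_locales (use assms e in auto)
    show ?thesis unfolding h2_rep_def
    proof (intro conjI ballI)
      show "ell2p m p (dco p M Y e1 e2)" by (rule dco_ell2p[OF YU p])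
      fix NX assume NX: "NX \<in> upsilon m p"
      obtain N X where NXe: "NX = (N, X)" by (cases NX)
      have XU: "(N, X) \<in> upsilon m p" using NX NXe by simp
      have "Fm N X \<in> carrier_mat N N \<and> (\<forall>i<N. \<forall>j<N. (\<lambda>l. \<Sum>w\<in>words m l. dco p M Y e1 e2 w * mpow N X w $$ (i, j)) sums (Fm N X $$ (i, j)))"
        using Fm_carrier bylength_has_sum[OF Fm_has_sum[OF XU]] by blast
      then show "case NX of (N, X) \<Rightarrow> (case (N, X) of (N, X) \<Rightarrow> sandwich N e1 (Kp m p N X M Y) e2) \<in> carrier_mat N N \<and>
          (\<forall>i<N. \<forall>j<N. (\<lambda>l. \<Sum>w\<in>words m l. dco p M Y e1 e2 w * mpow N X w $$ (i, j)) sums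
            (case (N, X) of (N, X) \<Rightarrow> sandwich N e1 (Kp m p N X M Y) e2) $$ (i, j))"
        unfolding NXe Fm_def by simp
    qed
  qed
  have H2: "in_H2 m p (\<lambda>(N, X). sandwich N e1 (Kp m p N X M Y) e2)"
    if e: "e1 \<in> carrier_vec M" "e2 \<in> carrier_vec M" for e1 e2
  proof -
    interpret FF m p M Y e1 e2 by unfold_locales (use assms e in auto)
    show ?thesis unfolding in_H2_def using Fm_nc rep[OF e] by blast
  qed
  have inner: "h2_inner m p f (\<lambda>(N, X). sandwich N e1 (Kp m p N X M Y) e2)
              = (vstar e2 * f (M, Y) * vcol e1) $$ (0, 0)"
    if e: "e1 \<in> carrier_vec M" "e2 \<in> carrier_vec M" and fH: "in_H2 m p f" for e1 e2 f
  proof -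
    define F where "F = (\<lambda>(N, X). sandwich N e1 (Kp m p N X M Y) e2)"
    define c where "c = h2_coef m p f"
    have ex: "\<exists>c. h2_rep m p f c" using fH by (simp add: in_H2_def)
    have cf: "h2_rep m p f c" unfolding c_def h2_coef_def using ex by (rule someI_ex)
    have cF0: "h2_rep m p F (dco p M Y e1 e2)" unfolding F_def by (rule rep[OF e])
    have cF: "h2_rep m p F (h2_coef m p F)" unfolding h2_coef_def
      using exI[of "h2_rep m p F", OF cF0] by (rule someI_ex)
    have coefeq: "h2_coef m p F w = dco p M Y e1 e2 w" if "w \<in> allwords m" for w
      using coef_unique[OF cF rep[OF e, folded F_def] that] .
    define q where "q w = (\<Sum>a<M. \<Sum>b<M. cnj (e2$a) * mpow M Y w $$ (a,b) * e1$b)" for w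
    have q_alt: "q = (\<lambda>w. cnj (\<Sum>a<M. \<Sum>b<M. e2$a * cnj (mpow M Y w $$ (a,b)) * cnj (e1$b)))"
      by (rule ext) (simp add: q_def)
    have SQq: "SQ m p q" unfolding q_alt by (rule SQ_cnj[OF dco_SQ[OF YU p]])
    have ell: "ell2p m p c" using cf by (simp add: h2_rep_def)
    have summ: "(\<lambda>w. c w * q w) summable_on allwords m" by (rule prod_summable[OF ell SQq p])
    have termeq: "complex_of_real (inverse (p ^ length w)) * c w * cnj (h2_coef m p F w) = c w * q w"
      if w: "w \<in> allwords m" for w
    proof -
      have "cnj (dco p M Y e1 e2 w) = of_real (p ^ length w) * q w"
        by (simp add: dco_def q_def mult_ac)
      moreover have "complex_of_real (inverse (p ^ length w)) * of_real (p ^ length w) = 1"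
        using p by (simp flip: of_real_mult)
      ultimately show ?thesis unfolding coefeq[OF w]
        by (metis (no_types, lifting) mult.assoc mult.left_commute mult.right_neutral)
    qed
    have LHS: "h2_inner m p f F = infsum (\<lambda>w. c w * q w) (allwords m)"
      unfolding h2_inner_def c_def[symmetric] by (rule infsum_cong) (rule termeq)
    have s1: "(\<lambda>l. \<Sum>w\<in>words m l. c w * q w) sums infsum (\<lambda>w. c w * q w) (allwords m)"
      by (rule bylength_summable[OF summ])
    have fYc: "f (M, Y) \<in> carrier_mat M M" using cf YU unfolding h2_rep_def by auto
    have fYs: "(\<lambda>l. \<Sum>w\<in>words m l. c w * mpow M Y w $$ (a, b)) sums (f (M, Y) $$ (a, b))"
      if "a < M" "b < M" for a b
      using cf YU that unfolding h2_rep_def by auto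
    have vs: "vstar e2 \<in> carrier_mat 1 M" using e by (simp add: vstar_def)
    have vc: "vcol e1 \<in> carrier_mat M 1" using e by (simp add: vcol_def)
    have RHS: "(vstar e2 * f (M, Y) * vcol e1) $$ (0, 0) = (\<Sum>b<M. (\<Sum>a<M. cnj (e2$a) * f (M, Y) $$ (a,b)) * e1$b)"
      unfolding mult3_index[OF vs fYc vc, of 0 0, simplified]
      using e by (intro sum.cong refl) (auto simp: vstar_def vcol_def)
    have s2: "(\<lambda>l. \<Sum>b<M. (\<Sum>a<M. cnj (e2$a) * (\<Sum>w\<in>words m l. c w * mpow M Y w $$ (a, b))) * e1$b)
       sums (\<Sum>b<M. (\<Sum>a<M. cnj (e2$a) * f (M, Y) $$ (a,b)) * e1$b)"
      by (intro sums_sum sums_mult sums_mult2 fYs) auto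
    have seq: "(\<Sum>b<M. (\<Sum>a<M. cnj (e2$a) * (\<Sum>w\<in>words m l. c w * mpow M Y w $$ (a, b))) * e1$b)
       = (\<Sum>w\<in>words m l. c w * q w)" for l
    proof -
      have "(\<Sum>b<M. (\<Sum>a<M. cnj (e2$a) * (\<Sum>w\<in>words m l. c w * mpow M Y w $$ (a, b))) * e1$b)
          = (\<Sum>b<M. \<Sum>a<M. \<Sum>w\<in>words m l. c w * (cnj (e2$a) * mpow M Y w $$ (a, b) * e1$b))"
        by (simp add: sum_distrib_left sum_distrib_right mult_ac)
      also have "\<dots> = (\<Sum>a<M. \<Sum>b<M. \<Sum>w\<in>words m l. c w * (cnj (e2$a) * mpow M Y w $$ (a, b) * e1$b))"
        by (rule sum.swap)
      also have "\<dots> = (\<Sum>a<M. \<Sum>w\<in>words m l. \<Sum>b<M. c w * (cnj (e2$a) * mpow M Y w $$ (a, b) * e1$b))"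
        by (rule sum.cong[OF refl], rule sum.swap)
      also have "\<dots> = (\<Sum>w\<in>words m l. \<Sum>a<M. \<Sum>b<M. c w * (cnj (e2$a) * mpow M Y w $$ (a, b) * e1$b))"
        by (rule sum.swap)
      also have "\<dots> = (\<Sum>w\<in>words m l. c w * q w)"
        by (simp add: q_def sum_distrib_left)
      finally show ?thesis .
    qed
    have "infsum (\<lambda>w. c w * q w) (allwords m) = (\<Sum>b<M. (\<Sum>a<M. cnj (e2$a) * f (M, Y) $$ (a,b)) * e1$b)"
      using s1 s2 unfolding seq by (rule sums_unique2)
    then show ?thesis using LHS RHS unfolding F_def by simp
  qed
  show ?thesis using H2 inner by blast
qed

end
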